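(* Let $X_1,\dots,X_n$ be mutually independent random variables with product distribution $\mu$ and let $A_1,\dots,A_m$ be events, $A_i$ determined by the variables indexed by $\mathrm{vbl}(A_i)\subseteq[n]$, such that $\Pr_\mu(A_i\wedge A_j)=0$ whenever $i\ne j$ and $\mathrm{vbl}(A_i)\cap\mathrm{vbl}(A_j)\ne\emptyset$. Let $G$ be the dependency graph on $[m]$ (distinct $i,j$ adjacent iff $\mathrm{vbl}(A_i)\cap\mathrm{vbl}(A_j)\neq\emptyset$), $\mathcal{I}$ its collection of independent sets (including $\emptyset$), $p_i=\Pr_\mu(A_i)$, $\mathbf p=(p_1,\dots,p_m)$, and for $\mathbf y\in\mathbb R^m$ set $q_\emptyset(\mathbf y)=\sum_{I\in\mathcal I}(-1)^{|I|}\prod_{i\in I}y_i$. If $q_\emptyset(\mathbf p)>0$, then $q_\emptyset(p_1,\dots,p_{i-1},p_iz,p_{i+1},\dots,p_m)>0$ for every $i\in[m]$ and every $0\le z\le1$. *)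

theory Defs
  imports "HOL-Probability.Probability"
begin

text \<open>Variable framework: variables indexed by {..<n}, events by {..<m}.
  The probability space is the product space of the variable distributions.\<close>

definition determined_by :: "(nat \<Rightarrow> 'b) measure \<Rightarrow> (nat \<Rightarrow> 'b) set \<Rightarrow> nat set \<Rightarrow> bool" where
  "determined_by \<mu> A S \<longleftrightarrow>
     (\<forall>\<omega>\<in>space \<mu>. \<forall>\<omega>'\<in>space \<mu>. (\<forall>j\<in>S. \<omega> j = \<omega>' j) \<longrightarrow> (\<omega> \<in> A \<longleftrightarrow> \<omega>' \<in> A))"

definition dep_adj :: "(nat \<Rightarrow> nat set) \<Rightarrow> nat \<Rightarrow> nat \<Rightarrow> bool" where
  "dep_adj vbl i j \<longleftrightarrow> i \<noteq> j \<and> vbl i \<inter> vbl j \<noteq> {}"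

definition indep_sets :: "nat \<Rightarrow> (nat \<Rightarrow> nat set) \<Rightarrow> nat set set" where
  "indep_sets m vbl = {I. I \<subseteq> {..<m} \<and> (\<forall>i\<in>I. \<forall>j\<in>I. \<not> dep_adj vbl i j)}"

definition q_empty :: "nat \<Rightarrow> (nat \<Rightarrow> nat set) \<Rightarrow> (nat \<Rightarrow> real) \<Rightarrow> real" where
  "q_empty m vbl y = (\<Sum>I\<in>indep_sets m vbl. (-1) ^ card I * (\<Prod>i\<in>I. y i))"

end

theory Submission
  imports Defs
begin

lemma determined_preimage:
  assumes A: "A \<in> sets (PiM I M)" and S: "S \<subseteq> I"
    and det: "determined_by (PiM I M) A S" and w0: "\<omega>0 \<in> space (PiM I M)"
  shows "\<exists>A'\<in>sets (PiM S M). A = (\<lambda>\<omega>. restrict \<omega> S) -` A' \<inter> space (PiM I M)"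
proof -
  let ?y = "restrict \<omega>0 (I - S)"
  let ?f = "\<lambda>x. merge S (I - S) (x, ?y)"
  have y0: "?y \<in> space (PiM (I-S) M)" using w0 by (auto simp: space_PiM)
  have SI: "S \<union> (I - S) = I" using S by auto
  have f: "?f \<in> measurable (PiM S M) (PiM I M)"
    using measurable_compose[OF measurable_Pair2'[OF y0] measurable_merge[of S "I-S" M]] SI
    by simp
  define A' where "A' = ?f -` A \<inter> space (PiM S M)"
  have "A' \<in> sets (PiM S M)" unfolding A'_def using measurable_sets[OF f A] .
  moreover have "A = (\<lambda>\<omega>. restrict \<omega> S) -` A' \<inter> space (PiM I M)"
  proof (intro set_eqI iffI)
    fix \<omega> assume wA: "\<omega> \<in> A"
    have wsp: "\<omega> \<in> space (PiM I M)" using sets.sets_into_space[OF A] wA by auto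
    have r: "restrict \<omega> S \<in> space (PiM S M)" using wsp S by (auto simp: space_PiM)
    have fs: "?f (restrict \<omega> S) \<in> space (PiM I M)" using measurable_space[OF f r] by simp
    have "\<forall>j\<in>S. \<omega> j = ?f (restrict \<omega> S) j" by (simp add: merge_def)
    with det wsp fs wA have "?f (restrict \<omega> S) \<in> A" unfolding determined_by_def by blast
    then show "\<omega> \<in> (\<lambda>\<omega>. restrict \<omega> S) -` A' \<inter> space (PiM I M)"
      using r wsp by (simp add: A'_def)
  next
    fix \<omega> assume h: "\<omega> \<in> (\<lambda>\<omega>. restrict \<omega> S) -` A' \<inter> space (PiM I M)"
    then have wsp: "\<omega> \<in> space (PiM I M)" and fa: "?f (restrict \<omega> S) \<in> A"
      by (auto simp: A'_def)
    have r: "restrict \<omega> S \<in> space (PiM S M)" using wsp S by (auto simp: space_PiM)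
    have fs: "?f (restrict \<omega> S) \<in> space (PiM I M)" using measurable_space[OF f r] by simp
    have "\<forall>j\<in>S. \<omega> j = ?f (restrict \<omega> S) j" by (simp add: merge_def)
    with det wsp fs fa show "\<omega> \<in> A" unfolding determined_by_def by blast
  qed
  ultimately show ?thesis by blast
qed

lemma (in product_prob_space) coord_indep:
  "P.indep_vars M (\<lambda>i \<omega>. \<omega> i) I"
proof (cases "I = {}")
  case True then show ?thesis unfolding P.indep_vars_def P.indep_sets_def by simp
next
  case False
  show ?thesis
  proof (subst P.indep_vars_iff_distr_eq_PiM'[OF False])
    show "\<And>i. i \<in> I \<Longrightarrow> random_variable (M i) (\<lambda>\<omega>. \<omega> i)" by measurable
    have "distr (PiM I M) (PiM I M) (\<lambda>x. \<lambda>i\<in>I. x i) = distr (PiM I M) (PiM I M) (\<lambda>x. x)"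
      by (rule distr_cong) (auto simp: space_PiM)
    also have "\<dots> = PiM I M" by simp
    also have "\<dots> = PiM I (\<lambda>i. distr (PiM I M) (M i) (\<lambda>\<omega>. \<omega> i))"
      by (rule PiM_cong) (auto simp: PiM_component)
    finally show "distr (PiM I M) (PiM I M) (\<lambda>x. \<lambda>i\<in>I. x i) = PiM I (\<lambda>i. distr (PiM I M) (M i) (\<lambda>\<omega>. \<omega> i))" .
  qed
qed

lemma indep_determined:
  fixes M :: "nat \<Rightarrow> 'a measure"
  assumes prob: "\<And>j. j \<in> I \<Longrightarrow> prob_space (M j)"
    and A: "A \<in> sets (PiM I M)" and B: "B \<in> sets (PiM I M)"
    and J: "J \<subseteq> I" and K: "K \<subseteq> I" and JK: "J \<inter> K = {}"
    and dA: "determined_by (PiM I M) A J" and dB: "determined_by (PiM I M) B K"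
  shows "measure (PiM I M) (A \<inter> B) = measure (PiM I M) A * measure (PiM I M) B"
proof -
  define M' where "M' i = (if i \<in> I then M i else return (count_space UNIV) undefined)" for i
  have eq: "PiM I M' = PiM I M" by (rule PiM_cong) (auto simp: M'_def)
  have pM': "prob_space (M' i)" for i
  proof (cases "i \<in> I")
    case True then show ?thesis by (simp add: M'_def prob)
  next
    case False then show ?thesis unfolding M'_def by (simp add: prob_space_return)
  qed
  interpret product_prob_space M' I
    by (intro product_prob_space.intro product_sigma_finite.intro product_prob_space_axioms.intro prob_space_imp_sigma_finite pM')
  have A: "A \<in> sets (PiM I M')" and B: "B \<in> sets (PiM I M')"
    and dA: "determined_by (PiM I M') A J" and dB: "determined_by (PiM I M') B K"
    using assms by (simp_all add: eq)
  have "measure (PiM I M') (A \<inter> B) = measure (PiM I M') A * measure (PiM I M') B"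
  proof -
  obtain \<omega>0 where w0: "\<omega>0 \<in> space (PiM I M')" using P.not_empty by blast
  obtain A' where A': "A' \<in> sets (PiM J M')" "A = (\<lambda>\<omega>. restrict \<omega> J) -` A' \<inter> space (PiM I M')"
    using determined_preimage[OF A J dA w0] by blast
  obtain B' where B': "B' \<in> sets (PiM K M')" "B = (\<lambda>\<omega>. restrict \<omega> K) -` B' \<inter> space (PiM I M')"
    using determined_preimage[OF B K dB w0] by blast
  have iv: "P.indep_var (PiM J M') (\<lambda>\<omega>. restrict (\<lambda>i. \<omega> i) J) (PiM K M') (\<lambda>\<omega>. restrict (\<lambda>i. \<omega> i) K)"
    using P.indep_var_restrict[OF coord_indep JK J K] .
  then have iset: "P.indep_set
      (sigma_sets (space (PiM I M')) {(\<lambda>\<omega>. restrict \<omega> J) -` X \<inter> space (PiM I M') | X. X \<in> sets (PiM J M')})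
      (sigma_sets (space (PiM I M')) {(\<lambda>\<omega>. restrict \<omega> K) -` X \<inter> space (PiM I M') | X. X \<in> sets (PiM K M')})"
    unfolding P.indep_var_eq by simp
  have a: "A \<in> sigma_sets (space (PiM I M')) {(\<lambda>\<omega>. restrict \<omega> J) -` X \<inter> space (PiM I M') | X. X \<in> sets (PiM J M')}"
    unfolding A'(2) by (rule sigma_sets.Basic) (use A'(1) in blast)
  have b: "B \<in> sigma_sets (space (PiM I M')) {(\<lambda>\<omega>. restrict \<omega> K) -` X \<inter> space (PiM I M') | X. X \<in> sets (PiM K M')}"
    unfolding B'(2) by (rule sigma_sets.Basic) (use B'(1) in blast)
  show ?thesis
    by (rule P.indep_setD[OF iset a b])
qed
  then show ?thesis by (simp add: eq)
qed

definition Qs :: "nat \<Rightarrow> (nat \<Rightarrow> nat set) \<Rightarrow> (nat \<Rightarrow> real) \<Rightarrow> nat set \<Rightarrow> real" where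
  "Qs m vbl y T = (\<Sum>I\<in>{I\<in>indep_sets m vbl. I \<subseteq> T}. (-1) ^ card I * (\<Prod>i\<in>I. y i))"

lemma q_empty_Qs: "q_empty m vbl y = Qs m vbl y {..<m}"
  unfolding q_empty_def Qs_def by (rule sum.cong) (auto simp: indep_sets_def)

lemma Qs_cong: "(\<And>j. j \<in> T \<Longrightarrow> y j = y' j) \<Longrightarrow> Qs m vbl y T = Qs m vbl y' T"
  unfolding Qs_def by (intro sum.cong refl arg_cong2[where f="(*)"] prod.cong) auto

lemma Qs_empty: "Qs m vbl y {} = 1"
proof -
  have "{I\<in>indep_sets m vbl. I \<subseteq> {}} = {{}}" by (auto simp: indep_sets_def)
  then show ?thesis by (simp add: Qs_def)
qed

lemma Qs_split:
  assumes i: "i \<in> T" and T: "T \<subseteq> {..<m}"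
  shows "Qs m vbl y T = Qs m vbl y (T - {i}) - y i * Qs m vbl y {j\<in>T-{i}. vbl j \<inter> vbl i = {}}"
proof -
  define N where "N = {j\<in>T-{i}. vbl j \<inter> vbl i = {}}"
  define f where "f I = (-1::real) ^ card I * (\<Prod>i\<in>I. y i)" for I
  let ?S = "{I\<in>indep_sets m vbl. I \<subseteq> T}"
  let ?S1 = "{I\<in>indep_sets m vbl. I \<subseteq> T - {i}}"
  let ?S2 = "{I\<in>indep_sets m vbl. I \<subseteq> T \<and> i \<in> I}"
  let ?S3 = "{I\<in>indep_sets m vbl. I \<subseteq> N}"
  have fin: "finite (indep_sets m vbl)"
    by (rule finite_subset[of _ "Pow {..<m}"]) (auto simp: indep_sets_def)
  have split: "?S = ?S1 \<union> ?S2" by auto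
  have "sum f ?S = sum f ?S1 + sum f ?S2"
    unfolding split by (rule sum.union_disjoint) (use fin in auto)
  moreover have S2: "?S2 = insert i ` ?S3"
  proof (intro set_eqI iffI)
    fix I assume I: "I \<in> ?S2"
    then have "I - {i} \<in> ?S3" unfolding N_def indep_sets_def dep_adj_def using i by auto
    moreover have "I = insert i (I - {i})" using I by auto
    ultimately show "I \<in> insert i ` ?S3" by blast
  next
    fix I assume "I \<in> insert i ` ?S3"
    then obtain J where J: "J \<in> ?S3" "I = insert i J" by blast
    then show "I \<in> ?S2" using i T unfolding N_def indep_sets_def dep_adj_def by auto
  qed
  have inj: "inj_on (insert i) ?S3"
    unfolding N_def inj_on_def by auto
  have "sum f ?S2 = sum (f \<circ> insert i) ?S3" unfolding S2 by (rule sum.reindex[OF inj])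
  also have "\<dots> = sum (\<lambda>J. - (y i * f J)) ?S3"
  proof (rule sum.cong[OF refl])
    fix J assume J: "J \<in> ?S3"
    then have "i \<notin> J" "finite J" using finite_subset[of J "{..<m}"]
      unfolding N_def indep_sets_def by auto
    then show "(f \<circ> insert i) J = - (y i * f J)" by (simp add: f_def)
  qed
  also have "\<dots> = - (y i * sum f ?S3)" by (simp add: sum_distrib_left sum_negf)
  finally show ?thesis using \<open>sum f ?S = _\<close> unfolding Qs_def f_def N_def by simp
qed

lemma determined_mono: "determined_by \<mu> A S \<Longrightarrow> S \<subseteq> S' \<Longrightarrow> determined_by \<mu> A S'"
  unfolding determined_by_def by blast

lemma determined_compl_UN:
  assumes "\<And>j. j \<in> N \<Longrightarrow> determined_by \<mu> (A j) S"
  shows "determined_by \<mu> (space \<mu> - (\<Union>j\<in>N. A j)) S"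
  using assms unfolding determined_by_def by blast

theorem lemma11:
  fixes n m :: nat
    and M :: "nat \<Rightarrow> 'a measure"
    and A :: "nat \<Rightarrow> (nat \<Rightarrow> 'a) set"
    and vbl :: "nat \<Rightarrow> nat set"
  defines "\<mu> \<equiv> PiM {..<n} M"
  defines "p \<equiv> (\<lambda>i. measure \<mu> (A i))"
  assumes prob: "\<And>j. j < n \<Longrightarrow> prob_space (M j)"
    and events: "\<And>i. i < m \<Longrightarrow> A i \<in> sets \<mu>"
    and vbl_sub: "\<And>i. i < m \<Longrightarrow> vbl i \<subseteq> {..<n}"
    and determined: "\<And>i. i < m \<Longrightarrow> determined_by \<mu> (A i) (vbl i)"
    and disjoint: "\<And>i j. i < m \<Longrightarrow> j < m \<Longrightarrow> i \<noteq> j \<Longrightarrow> vbl i \<inter> vbl j \<noteq> {}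
                     \<Longrightarrow> measure \<mu> (A i \<inter> A j) = 0"
    and pos: "q_empty m vbl p > 0"
  shows "\<forall>i<m. \<forall>z::real. 0 \<le> z \<and> z \<le> 1 \<longrightarrow> q_empty m vbl (p(i := p i * z)) > 0"
proof -
  interpret P: prob_space \<mu> unfolding \<mu>_def by (rule prob_space_PiM) (use prob in auto)
  define E where "E T = space \<mu> - (\<Union>j\<in>T. A j)" for T
  have Esets: "E T \<in> sets \<mu>" if "T \<subseteq> {..<m}" for T
  proof -
    have "finite T" using that finite_subset by blast
    then show ?thesis unfolding E_def using that events by (intro sets.Diff sets.finite_UN) auto
  qed
  have Edet: "determined_by \<mu> (E T) (\<Union>j\<in>T. vbl j)" if "T \<subseteq> {..<m}" for T
    unfolding E_def by (rule determined_compl_UN, rule determined_mono[OF determined]) (use that in auto)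
  have main: "measure \<mu> (E T) = Qs m vbl p T" if "T \<subseteq> {..<m}" for T
  proof -
    have "finite T" using that finite_subset by blast
    then show ?thesis using that
    proof (induction T rule: finite_psubset_induct)
    case (psubset T)
      have T: "T \<subseteq> {..<m}" by fact
      show "measure \<mu> (E T) = Qs m vbl p T"
      proof (cases "T = {}")
        case True
        then show ?thesis by (simp add: E_def Qs_empty P.prob_space)
      next
        case False
        then obtain i where i: "i \<in> T" by blast
        define T' where "T' = T - {i}"
        define N where "N = {j\<in>T-{i}. vbl j \<inter> vbl i = {}}"
        have im: "i < m" using i T by auto
        have T'm: "T' \<subseteq> {..<m}" and Nm: "N \<subseteq> {..<m}" using T by (auto simp: T'_def N_def)
        have finT: "finite T" using T finite_subset by blast
        have IH1: "measure \<mu> (E T') = Qs m vbl p T'"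
          using psubset.IH[of T' , OF _ T'm] i unfolding T'_def by blast
        have IH2: "measure \<mu> (E N) = Qs m vbl p N"
          using psubset.IH[of N, OF _ Nm] i unfolding N_def by blast
        have ET: "E T = E T' - A i" unfolding E_def T'_def using i by auto
        have Ai: "A i \<in> sets \<mu>" using events im by auto
        have s1: "measure \<mu> (E T) = measure \<mu> (E T') - measure \<mu> (E T' \<inter> A i)"
          unfolding ET by (rule P.finite_measure_Diff'[OF Esets[OF T'm] Ai])
        define Z where "Z = (\<Union>j\<in>T'-N. A i \<inter> A j)"
        have Zsub: "T' - N \<subseteq> {..<m}" using T'm by auto
        have finZ: "finite (T' - N)" using finT unfolding T'_def by auto
        have Znull: "Z \<in> null_sets \<mu>"
          unfolding Z_def
        proof (rule null_sets.finite_UN[OF finZ])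
          fix j assume j: "j \<in> T' - N"
          then have jm: "j < m" "j \<noteq> i" "vbl i \<inter> vbl j \<noteq> {}" using T'm unfolding T'_def N_def by auto
          have "A i \<inter> A j \<in> sets \<mu>" using events im jm by auto
          moreover have "measure \<mu> (A i \<inter> A j) = 0" using disjoint[OF im jm(1)] jm by auto
          ultimately show "A i \<inter> A j \<in> null_sets \<mu>"
            by (simp add: P.emeasure_eq_measure null_sets_def)
        qed
        have "E T' \<inter> A i = (A i \<inter> E N) - Z"
          unfolding E_def Z_def T'_def N_def by auto
        then have s2: "measure \<mu> (E T' \<inter> A i) = measure \<mu> (A i \<inter> E N)"
          using measure_Diff_null_set[OF _ Znull] Ai Esets[OF Nm] by auto
        have s3: "measure \<mu> (A i \<inter> E N) = p i * measure \<mu> (E N)"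
          unfolding p_def \<mu>_def
        proof (rule indep_determined)
          show "\<And>j. j \<in> {..<n} \<Longrightarrow> prob_space (M j)" using prob by auto
          show "A i \<in> sets (PiM {..<n} M)" using Ai \<mu>_def by simp
          show "E N \<in> sets (PiM {..<n} M)" using Esets[OF Nm] \<mu>_def by simp
          show "vbl i \<subseteq> {..<n}" using vbl_sub im by auto
          show "(\<Union>j\<in>N. vbl j) \<subseteq> {..<n}" using vbl_sub Nm by auto
          show "vbl i \<inter> (\<Union>j\<in>N. vbl j) = {}" unfolding N_def by auto
          show "determined_by (PiM {..<n} M) (A i) (vbl i)" using determined[OF im] \<mu>_def by simp
          show "determined_by (PiM {..<n} M) (E N) (\<Union>j\<in>N. vbl j)" using Edet[OF Nm] \<mu>_def by simp
        qed
        show ?thesis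
          using s1 s2 s3 IH1 IH2 Qs_split[OF i T, of vbl p] unfolding T'_def N_def by simp
      qed
    qed
  qed
  show ?thesis
  proof (intro allI impI)
    fix i :: nat and z :: real
    assume im: "i < m" and z: "0 \<le> z \<and> z \<le> 1"
    define T' where "T' = {..<m} - {i}"
    define N where "N = {j\<in>{..<m}-{i}. vbl j \<inter> vbl i = {}}"
    have i: "i \<in> {..<m}" using im by simp
    have Nm: "N \<subseteq> {..<m}" unfolding N_def by auto
    have qy: "q_empty m vbl (p(i := p i * z)) = Qs m vbl (p(i := p i * z)) T' - p i * z * Qs m vbl (p(i := p i * z)) N"
      unfolding q_empty_Qs T'_def N_def using Qs_split[OF i order_refl, of vbl "p(i := p i * z)"] by simp
    have c1: "Qs m vbl (p(i := p i * z)) T' = Qs m vbl p T'" by (rule Qs_cong) (auto simp: T'_def)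
    have c2: "Qs m vbl (p(i := p i * z)) N = Qs m vbl p N" by (rule Qs_cong) (auto simp: N_def)
    have qp: "q_empty m vbl p = Qs m vbl p T' - p i * Qs m vbl p N"
      unfolding q_empty_Qs T'_def N_def using Qs_split[OF i order_refl, of vbl p] by simp
    have QN: "Qs m vbl p N \<ge> 0" using main[OF Nm] by (metis measure_nonneg)
    have pi: "p i \<ge> 0" unfolding p_def by simp
    have "(p i * Qs m vbl p N) * z \<le> p i * Qs m vbl p N"
      by (rule mult_right_le_one_le) (use QN pi z in auto)
    then show "q_empty m vbl (p(i := p i * z)) > 0"
      using qy c1 c2 qp pos by (simp add: algebra_simps)
  qed
qed

end
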